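(* Let $m,k_1,k_2$ be integers with $m\ge 2$. There exists a set $A\subseteq\mathbb{Z}_m$ such that $\hat{r}_{k_1,k_2}(A,n)=\hat{r}_{k_1,k_2}(\mathbb{Z}_m\setminus A,n)$ for all $n\in\mathbb{Z}_m$ if and only if $m$ is even and one of the following holds: (i) $k_1$ and $k_2$ have the same parity; (ii) $k_1$ and $k_2$ have different parities and $v_2(k_i)<v_2(m)$ for $i=1,2$.
   Context: $\mathbb{Z}_m$ denotes the set of residue classes modulo $m$. For integers $k_1,k_2$, a set $A\subseteq\mathbb{Z}_m$ and $n\in\mathbb{Z}_m$, $\hat{r}_{k_1,k_2}(A,n)$ denotes the number of ordered pairs $(a_1,a_2)\in A\times A$ with $n=k_1a_1+k_2a_2$ in $\mathbb{Z}_m$. For a nonzero integer $k$, $v_2(k)=t$ means $2^t\mid k$ and $2^{t+1}\nmid k$; by convention $v_2(0)=+\infty$. *)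

theory Defs
  imports Main "HOL-Library.Extended_Nat" "HOL-Computational_Algebra.Primes"
begin

text \<open>Z_m is modelled by the canonical residues {0..<m} of int, arithmetic taken mod m.\<close>

definition Zmod :: "int \<Rightarrow> int set" where
  "Zmod m = {0..<m}"

definition rhat :: "int \<Rightarrow> int \<Rightarrow> int \<Rightarrow> int set \<Rightarrow> int \<Rightarrow> nat" where
  "rhat m k1 k2 A n = card {(a1, a2). a1 \<in> A \<and> a2 \<in> A \<and> (k1 * a1 + k2 * a2) mod m = n mod m}"

definition v2 :: "int \<Rightarrow> enat" where
  "v2 k = (if k = 0 then \<infinity> else enat (multiplicity (2::int) k))"

end

theory Submission
  imports Defs
begin

lemma rhat_swap: "rhat m k1 k2 X n = rhat m k2 k1 X n"
proof -
  have "{(a1, a2). a1 \<in> X \<and> a2 \<in> X \<and> (k2 * a1 + k1 * a2) mod m = n mod m}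
        = prod.swap ` {(a1, a2). a1 \<in> X \<and> a2 \<in> X \<and> (k1 * a1 + k2 * a2) mod m = n mod m}"
    by (auto simp: add.commute image_iff)
  then show ?thesis unfolding rhat_def
    by (simp add: card_image)
qed

lemma rhat_bij:
  assumes f: "bij_betw f A B" and g: "bij_betw g A B"
    and c: "\<And>x y. x \<in> A \<Longrightarrow> y \<in> A \<Longrightarrow> (k1 * f x + k2 * g y) mod m = (k1 * x + k2 * y) mod m"
  shows "rhat m k1 k2 A n = rhat m k1 k2 B n"
proof -
  let ?S = "{(a1, a2). a1 \<in> A \<and> a2 \<in> A \<and> (k1 * a1 + k2 * a2) mod m = n mod m}"
  let ?T = "{(a1, a2). a1 \<in> B \<and> a2 \<in> B \<and> (k1 * a1 + k2 * a2) mod m = n mod m}"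
  have fi: "inj_on f A" and gi: "inj_on g A" using f g bij_betw_def by auto
  have fs: "f ` A = B" and gs: "g ` A = B" using f g bij_betw_imp_surj_on by auto
  have inj: "inj_on (map_prod f g) ?S"
    using fi gi by (auto simp: inj_on_def)
  have "map_prod f g ` ?S = ?T"
  proof
    show "map_prod f g ` ?S \<subseteq> ?T" using fs gs c by auto
    show "?T \<subseteq> map_prod f g ` ?S"
    proof
      fix p assume p: "p \<in> ?T"
      then obtain x' y' where p': "p = (x', y')" "x' \<in> B" "y' \<in> B"
        "(k1 * x' + k2 * y') mod m = n mod m" by auto
      obtain x where x: "x \<in> A" "f x = x'" using fs p' by auto
      obtain y where y: "y \<in> A" "g y = y'" using gs p' by auto
      have "(x, y) \<in> ?S" using c[OF x(1) y(1)] x y p' by auto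
      then show "p \<in> map_prod f g ` ?S" using x y p' by force
    qed
  qed
  then show ?thesis unfolding rhat_def using card_image[OF inj] by simp
qed

lemma rhat_sum:
  assumes qm: "q dvd m" and qk: "q dvd k2" and cop: "coprime q k1" and m: "m > 0"
    and X: "X \<subseteq> Zmod m"
  shows "(\<Sum>n\<in>{n\<in>Zmod m. q dvd n}. rhat m k1 k2 X n) = card X * card {x\<in>X. q dvd x}"
proof -
  have fX: "finite X" using X finite_subset unfolding Zmod_def by auto
  define h where "h = (\<lambda>(a1::int, a2::int). (k1 * a1 + k2 * a2) mod m)"
  define T where "T = {n\<in>Zmod m. q dvd n}"
  define S where "S = {p \<in> X \<times> X. h p \<in> T}"
  have fT: "finite T" unfolding T_def Zmod_def by (rule finite_subset[of _ "{0..<m}"]) auto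
  have fS: "finite S" unfolding S_def using fX by auto
  have r: "rhat m k1 k2 X n = card {p\<in>S. h p = n}" if "n \<in> T" for n
  proof -
    have nm: "n mod m = n" using that unfolding T_def Zmod_def by auto
    show ?thesis unfolding rhat_def nm
      by (rule arg_cong[where f=card]) (use that in \<open>auto simp: S_def h_def\<close>)
  qed
  have "(\<Sum>n\<in>T. rhat m k1 k2 X n) = (\<Sum>n\<in>T. sum (\<lambda>_. 1) {p\<in>S. h p = n})"
    using r by simp
  also have "\<dots> = sum (\<lambda>_. 1) S"
    by (rule sum.group[OF fS fT]) (auto simp: S_def)
  also have "\<dots> = card S" by simp
  also have "S = {x\<in>X. q dvd x} \<times> X"
  proof -
    have "h (a1, a2) \<in> T \<longleftrightarrow> q dvd a1" for a1 a2
    proof -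
      have "h (a1, a2) \<in> Zmod m" unfolding h_def Zmod_def using m by auto
      moreover have "q dvd (k1 * a1 + k2 * a2) mod m \<longleftrightarrow> q dvd k1 * a1 + k2 * a2"
        using qm by (simp add: dvd_mod_iff)
      moreover have "q dvd k1 * a1 + k2 * a2 \<longleftrightarrow> q dvd k1 * a1"
        using qk by (simp add: dvd_add_left_iff)
      moreover have "q dvd k1 * a1 \<longleftrightarrow> q dvd a1"
        using cop by (simp add: coprime_dvd_mult_right_iff)
      ultimately show ?thesis unfolding T_def h_def by auto
    qed
    then show ?thesis unfolding S_def by auto
  qed
  finally show ?thesis unfolding T_def by (simp add: card_cartesian_product)
qed

lemma card_mult_Zmod:
  assumes q: "q > 0" and qm: "q dvd m" and m: "m > 0"
  shows "int (card {x\<in>Zmod m. q dvd x}) = m div q"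
proof -
  obtain j where j: "m = q * j" using qm by auto
  have jpos: "j > 0" using j q m by (simp add: zero_less_mult_iff)
  have eq: "{x\<in>Zmod m. q dvd x} = (\<lambda>i. q * i) ` {0..<j}"
  proof
    show "{x\<in>Zmod m. q dvd x} \<subseteq> (\<lambda>i. q * i) ` {0..<j}"
    proof
      fix x assume x: "x \<in> {x\<in>Zmod m. q dvd x}"
      then obtain i where i: "x = q * i" by (auto simp: Zmod_def)
      have "0 \<le> q * i" "q * i < q * j" using x i j by (auto simp: Zmod_def)
      then have "0 \<le> i" "i < j" using q
        by (simp_all add: zero_le_mult_iff mult_less_cancel_left)
      then show "x \<in> (\<lambda>i. q * i) ` {0..<j}" using i by auto
    qed
    show "(\<lambda>i. q * i) ` {0..<j} \<subseteq> {x\<in>Zmod m. q dvd x}"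
      using q j by (auto simp: Zmod_def mult_less_cancel_left)
  qed
  have inj: "inj_on (\<lambda>i. q * i) {0..<j}" using q by (auto simp: inj_on_def)
  have "card {x\<in>Zmod m. q dvd x} = nat j" unfolding eq using card_image[OF inj] by simp
  then show ?thesis using j q jpos by simp
qed

lemma card_Zmod: "m \<ge> 0 \<Longrightarrow> card (Zmod m) = nat m"
  unfolding Zmod_def by simp

lemma forward_card:
  assumes m: "m \<ge> 2" and A: "A \<subseteq> Zmod m"
    and eq: "\<forall>n \<in> Zmod m. rhat m k1 k2 A n = rhat m k1 k2 (Zmod m - A) n"
  shows "card A = card (Zmod m - A)" "m = 2 * int (card A)"
proof -
  let ?B = "Zmod m - A"
  have B: "?B \<subseteq> Zmod m" by auto
  have s: "(\<Sum>n\<in>{n\<in>Zmod m. 1 dvd n}. rhat m k1 k2 X n) = card X * card X"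
    if "X \<subseteq> Zmod m" for X
    using rhat_sum[of 1 m k2 k1 X] that m by simp
  have "(\<Sum>n\<in>{n\<in>Zmod m. 1 dvd n}. rhat m k1 k2 A n) = (\<Sum>n\<in>{n\<in>Zmod m. 1 dvd n}. rhat m k1 k2 ?B n)"
    by (rule sum.cong) (use eq in auto)
  then have sq: "card A * card A = card ?B * card ?B"
    using s[OF A] s[OF B] by simp
  show c: "card A = card ?B"
  proof (rule linorder_cases[of "card A" "card ?B"])
    assume "card A < card ?B" then have "card A * card A < card ?B * card ?B"
      by (intro mult_strict_mono) auto
    then show ?thesis using sq by simp
  next
    assume "card ?B < card A" then have "card ?B * card ?B < card A * card A"
      by (intro mult_strict_mono) auto
    then show ?thesis using sq by simp
  qed
  have fin: "finite (Zmod m)" unfolding Zmod_def by simp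
  have "card A + card ?B = card (Zmod m)"
    using card_Diff_subset[OF finite_subset[OF A fin] A] card_mono[OF fin A] by simp
  then show "m = 2 * int (card A)" using c card_Zmod[of m] m by simp
qed

lemma v2_odd_less:
  assumes "odd k" "even m" "m \<noteq> 0"
  shows "v2 k < v2 m"
proof -
  have k: "k \<noteq> 0" using assms by auto
  have "multiplicity (2::int) k = 0" using assms by (simp add: not_dvd_imp_multiplicity_0)
  moreover have "1 \<le> multiplicity (2::int) m"
    using assms by (intro multiplicity_geI) auto
  ultimately show ?thesis using k assms unfolding v2_def by simp
qed

lemma forward_aux:
  assumes m: "m \<ge> 2" and A: "A \<subseteq> Zmod m"
    and eq: "\<forall>n \<in> Zmod m. rhat m k1 k2 A n = rhat m k1 k2 (Zmod m - A) n"
    and k1: "odd k1" and k2: "even k2"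
  shows "v2 k2 < v2 m"
proof (rule ccontr)
  assume nl: "\<not> v2 k2 < v2 m"
  let ?B = "Zmod m - A"
  define a where "a = multiplicity (2::int) m"
  define q where "q = (2::int) ^ a"
  have m0: "m \<noteq> 0" using m by auto
  have qm: "q dvd m" unfolding q_def a_def by (rule multiplicity_dvd)
  have qk: "q dvd k2"
  proof (cases "k2 = 0")
    case True then show ?thesis by simp
  next
    case False
    then have "a \<le> multiplicity 2 k2" using nl m0 unfolding v2_def a_def by auto
    then have "q dvd 2 ^ multiplicity 2 k2" unfolding q_def by (rule le_imp_power_dvd)
    then show ?thesis using multiplicity_dvd dvd_trans by blast
  qed
  have cop2: "coprime (2::int) k1" using k1 by simp
  have cop: "coprime q k1" unfolding q_def using cop2 by simp
  have q0: "q > 0" unfolding q_def by simp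
  have fc: "card A = card ?B" "m = 2 * int (card A)" using forward_card[OF m A eq] by auto
  have cA: "card A > 0" using fc m by auto
  have B: "?B \<subseteq> Zmod m" by auto
  have m0': "m > 0" using m by simp
  have "(\<Sum>n\<in>{n\<in>Zmod m. q dvd n}. rhat m k1 k2 A n) = (\<Sum>n\<in>{n\<in>Zmod m. q dvd n}. rhat m k1 k2 ?B n)"
    by (rule sum.cong) (use eq in auto)
  then have "card A * card {x\<in>A. q dvd x} = card ?B * card {x\<in>?B. q dvd x}"
    using rhat_sum[OF qm qk cop m0' A] rhat_sum[OF qm qk cop m0' B] by simp
  then have "card ?B * card {x\<in>A. q dvd x} = card ?B * card {x\<in>?B. q dvd x}"
    using fc(1) by simp
  moreover have "card ?B > 0" using cA fc(1) by simp
  ultimately have e: "card {x\<in>A. q dvd x} = card {x\<in>?B. q dvd x}" by simp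
  have fin: "finite (Zmod m)" unfolding Zmod_def by simp
  have "{x\<in>Zmod m. q dvd x} = {x\<in>A. q dvd x} \<union> {x\<in>?B. q dvd x}" using A by auto
  moreover have "card ({x\<in>A. q dvd x} \<union> {x\<in>?B. q dvd x}) = card {x\<in>A. q dvd x} + card {x\<in>?B. q dvd x}"
    by (rule card_Un_disjoint) (use finite_subset[OF _ fin] A in auto)
  ultimately have "m div q = 2 * int (card {x\<in>A. q dvd x})"
    using card_mult_Zmod[OF q0 qm] m e by simp
  moreover have "m = q * (m div q)" using qm by simp
  ultimately have "m = (2 * q) * int (card {x\<in>A. q dvd x})" by simp
  then have "2 * q dvd m" by (metis dvd_triv_left)
  then have "2 ^ Suc a dvd m" unfolding q_def by simp
  then have "Suc a \<le> a" unfolding a_def using m0 by (intro multiplicity_geI) auto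
  then show False by simp
qed

lemma shift_bij:
  assumes h: "(h::int) > 0"
  shows "bij_betw (\<lambda>y. (y + c) mod h + h) {0..<h} {h..<2*h}"
  unfolding bij_betw_def
proof
  show "inj_on (\<lambda>y. (y + c) mod h + h) {0..<h}"
  proof (rule inj_onI)
    fix x y assume x: "x \<in> {0..<h}" and y: "y \<in> {0..<h}"
      and e: "(x + c) mod h + h = (y + c) mod h + h"
    then have "(x + c) mod h = (y + c) mod h" by simp
    moreover have "x mod h = ((x + c) mod h - c) mod h" "y mod h = ((y + c) mod h - c) mod h"
      by (simp_all add: mod_diff_left_eq)
    ultimately have "x mod h = y mod h" by simp
    then show "x = y" using x y by simp
  qed
  show "(\<lambda>y. (y + c) mod h + h) ` {0..<h} = {h..<2*h}"
  proof
    show "(\<lambda>y. (y + c) mod h + h) ` {0..<h} \<subseteq> {h..<2*h}"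
      using h by auto
    show "{h..<2*h} \<subseteq> (\<lambda>y. (y + c) mod h + h) ` {0..<h}"
    proof
      fix z assume z: "z \<in> {h..<2*h}"
      define y where "y = (z - h - c) mod h"
      have y: "y \<in> {0..<h}" unfolding y_def using h by auto
      have "(y + c) mod h = (z - h - c + c) mod h" unfolding y_def by (simp add: mod_add_left_eq)
      also have "\<dots> = (z - h) mod h" by simp
      also have "\<dots> = z - h" using z by (intro mod_pos_pos_trivial) auto
      finally have "z = (y + c) mod h + h" by simp
      then show "z \<in> (\<lambda>y. (y + c) mod h + h) ` {0..<h}" using y by blast
    qed
  qed
qed

lemma backward_core:
  assumes mh: "m = 2 * h" and h: "h > 0"
    and c: "\<And>x y. x \<in> {0..<h} \<Longrightarrow> y \<in> {0..<h} \<Longrightarrow>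
      (k1 * ((x + c1) mod h + h) + k2 * ((y + c2) mod h + h)) mod m = (k1 * x + k2 * y) mod m"
  shows "\<exists>A \<subseteq> Zmod m. \<forall>n \<in> Zmod m. rhat m k1 k2 A n = rhat m k1 k2 (Zmod m - A) n"
proof (intro exI[of _ "{0..<h}"] conjI ballI)
  show "{0..<h} \<subseteq> Zmod m" using mh h by (auto simp: Zmod_def)
  have B: "Zmod m - {0..<h} = {h..<2*h}" using mh h by (auto simp: Zmod_def)
  fix n
  show "rhat m k1 k2 {0..<h} n = rhat m k1 k2 (Zmod m - {0..<h}) n"
    unfolding B by (rule rhat_bij[OF shift_bij[OF h] shift_bij[OF h] c])
qed

lemma gcd_dvd_half:
  fixes k m :: int
  assumes k: "k \<noteq> 0" and m: "m \<noteq> 0"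
    and lt: "multiplicity 2 k < multiplicity 2 m"
  shows "gcd k m dvd m div 2"
proof -
  define g where "g = gcd k m"
  obtain r where r: "m = g * r" unfolding g_def by (meson gcd_dvd2 dvdE)
  have g0: "g \<noteq> 0" using m unfolding g_def by simp
  have r0: "r \<noteq> 0" using m r by auto
  have p: "prime_elem (2::int)" by (simp add: prime_imp_prime_elem)
  have "even r"
  proof (rule ccontr)
    assume "odd r"
    then have "multiplicity (2::int) r = 0" by (simp add: not_dvd_imp_multiplicity_0)
    then have "multiplicity (2::int) m = multiplicity 2 g"
      using prime_elem_multiplicity_mult_distrib[OF p g0 r0] r by simp
    moreover have "multiplicity (2::int) g \<le> multiplicity 2 k"
      unfolding g_def using k by (intro dvd_imp_multiplicity_le) auto
    ultimately show False using lt by simp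
  qed
  then obtain s where "r = 2 * s" by blast
  then have "m div 2 = g * s" using r by simp
  then show ?thesis unfolding g_def by simp
qed

lemma backward_same:
  assumes m: "m \<ge> 2" "even m" and k: "even (k1 + k2)"
  shows "\<exists>A \<subseteq> Zmod m. \<forall>n \<in> Zmod m. rhat m k1 k2 A n = rhat m k1 k2 (Zmod m - A) n"
proof -
  define h where "h = m div 2"
  have mh: "m = 2 * h" unfolding h_def using m by simp
  have h: "h > 0" using mh m by simp
  obtain j where j: "k1 + k2 = 2 * j" using k by blast
  show ?thesis
  proof (rule backward_core[OF mh h, of k1 0 k2 0])
    fix x y assume x: "x \<in> {0..<h}" and y: "y \<in> {0..<h}"
    have "(x + 0) mod h = x" "(y + 0) mod h = y" using x y by simp_all
    moreover have "k1 * (x + h) + k2 * (y + h) = k1 * x + k2 * y + (k1 + k2) * h"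
      by (simp add: algebra_simps)
    moreover have "(k1 + k2) * h = j * m" using j mh by simp
    ultimately show "(k1 * ((x + 0) mod h + h) + k2 * ((y + 0) mod h + h)) mod m = (k1 * x + k2 * y) mod m"
      by simp
  qed
qed

lemma backward_diff:
  assumes m: "m \<ge> 2" "even m" and k1: "odd k1" and k2: "even k2" and v: "v2 k2 < v2 m"
  shows "\<exists>A \<subseteq> Zmod m. \<forall>n \<in> Zmod m. rhat m k1 k2 A n = rhat m k1 k2 (Zmod m - A) n"
proof -
  define h where "h = m div 2"
  have mh: "m = 2 * h" unfolding h_def using m by simp
  have h: "h > 0" using mh m by simp
  have k20: "k2 \<noteq> 0" using v unfolding v2_def by auto
  have m0: "m \<noteq> 0" using m by auto
  have "multiplicity 2 k2 < multiplicity 2 m" using v k20 m0 unfolding v2_def by simp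
  then have "gcd k2 m dvd h" unfolding h_def using gcd_dvd_half k20 m0 by blast
  then obtain t where t: "h = gcd k2 m * t" by blast
  obtain u v where uv: "u * k2 + v * m = gcd k2 m" using bezout_int by blast
  define c where "c = u * t"
  define w where "w = - (v * t)"
  have "k2 * c = (u * k2) * t" unfolding c_def by (simp add: algebra_simps)
  also have "\<dots> = (gcd k2 m - v * m) * t" using uv by (metis add_diff_cancel_right')
  also have "\<dots> = h + m * w" unfolding w_def using t by (simp add: algebra_simps)
  finally have kc: "k2 * c = h + m * w" .
  obtain f where f: "k1 = 2 * f + 1" using k1 by (metis oddE)
  obtain e where e: "k2 = 2 * e" using k2 by blast
  show ?thesis
  proof (rule backward_core[OF mh h, of k1 0 k2 c])
    fix x y assume x: "x \<in> {0..<h}" and y: "y \<in> {0..<h}"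
    define D where "D = (y + c) div h"
    have md: "(y + c) mod h = y + c - h * D" unfolding D_def
      using minus_div_mult_eq_mod[of "y + c" h] by (simp add: mult.commute)
    have x0: "(x + 0) mod h = x" using x by simp
    have "k1 * (x + h) + k2 * (y + c - h * D + h)
        = k1 * x + k2 * y + k1 * h + k2 * c - k2 * h * D + k2 * h"
      by (simp add: algebra_simps)
    also have "\<dots> = k1 * x + k2 * y + (h + f * m) + (h + m * w) - e * m * D + e * m"
      using f e kc mh by (simp add: algebra_simps)
    also have "\<dots> = k1 * x + k2 * y + m * (f + w - e * D + e + 1)"
      using mh by (simp add: algebra_simps)
    finally have eq: "k1 * ((x + 0) mod h + h) + k2 * ((y + c) mod h + h)
        = k1 * x + k2 * y + m * (f + w - e * D + e + 1)" using x0 md by simp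
    show "(k1 * ((x + 0) mod h + h) + k2 * ((y + c) mod h + h)) mod m = (k1 * x + k2 * y) mod m"
      unfolding eq by simp
  qed
qed

lemma P_swap:
  "(\<exists>A \<subseteq> Zmod m. \<forall>n \<in> Zmod m. rhat m k1 k2 A n = rhat m k1 k2 (Zmod m - A) n) \<longleftrightarrow>
   (\<exists>A \<subseteq> Zmod m. \<forall>n \<in> Zmod m. rhat m k2 k1 A n = rhat m k2 k1 (Zmod m - A) n)"
  using rhat_swap[of m k1 k2] rhat_swap[of m k2 k1] by metis

theorem corollary1:
  fixes m k1 k2 :: int
  assumes "m \<ge> 2"
  shows "(\<exists>A \<subseteq> Zmod m. \<forall>n \<in> Zmod m. rhat m k1 k2 A n = rhat m k1 k2 (Zmod m - A) n)
     \<longleftrightarrow> even m \<and> ((even k1 \<longleftrightarrow> even k2)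
            \<or> ((even k1 \<noteq> even k2) \<and> v2 k1 < v2 m \<and> v2 k2 < v2 m))"
proof
  assume P: "\<exists>A \<subseteq> Zmod m. \<forall>n \<in> Zmod m. rhat m k1 k2 A n = rhat m k1 k2 (Zmod m - A) n"
  then obtain A where A: "A \<subseteq> Zmod m" "\<forall>n \<in> Zmod m. rhat m k1 k2 A n = rhat m k1 k2 (Zmod m - A) n"
    by blast
  have em: "even m" using forward_card(2)[OF assms A] by simp
  have m0: "m \<noteq> 0" using assms by simp
  show "even m \<and> ((even k1 \<longleftrightarrow> even k2)
            \<or> ((even k1 \<noteq> even k2) \<and> v2 k1 < v2 m \<and> v2 k2 < v2 m))"
  proof (cases "even k1 \<longleftrightarrow> even k2")
    case True then show ?thesis using em by simp
  next
    case False
    show ?thesis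
    proof (cases "odd k1")
      case True
      then have "even k2" using False by simp
      then have "v2 k2 < v2 m" using forward_aux[OF assms A] True by simp
      moreover have "v2 k1 < v2 m" using v2_odd_less[OF True em m0] .
      ultimately show ?thesis using em False by simp
    next
      case k1e: False
      then have k2o: "odd k2" using False by simp
      from P have "\<exists>A \<subseteq> Zmod m. \<forall>n \<in> Zmod m. rhat m k2 k1 A n = rhat m k2 k1 (Zmod m - A) n"
        using P_swap by blast
      then obtain A' where A': "A' \<subseteq> Zmod m" "\<forall>n \<in> Zmod m. rhat m k2 k1 A' n = rhat m k2 k1 (Zmod m - A') n"
        by blast
      have "v2 k1 < v2 m" using forward_aux[OF assms A'] k1e k2o by simp
      moreover have "v2 k2 < v2 m" using v2_odd_less[OF k2o em m0] .
      ultimately show ?thesis using em False by simp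
    qed
  qed
next
  assume R: "even m \<and> ((even k1 \<longleftrightarrow> even k2)
            \<or> ((even k1 \<noteq> even k2) \<and> v2 k1 < v2 m \<and> v2 k2 < v2 m))"
  then have em: "even m" by simp
  show "\<exists>A \<subseteq> Zmod m. \<forall>n \<in> Zmod m. rhat m k1 k2 A n = rhat m k1 k2 (Zmod m - A) n"
  proof (cases "even k1 \<longleftrightarrow> even k2")
    case True
    then have "even (k1 + k2)" by auto
    then show ?thesis using backward_same[OF assms em] by simp
  next
    case False
    then have v: "v2 k1 < v2 m" "v2 k2 < v2 m" using R by auto
    show ?thesis
    proof (cases "odd k1")
      case True
      then have "even k2" using False by simp
      then show ?thesis using backward_diff[OF assms em True _ v(2)] by simp
    next
      case k1e: False
      then have k2o: "odd k2" using False by simp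
      have "\<exists>A \<subseteq> Zmod m. \<forall>n \<in> Zmod m. rhat m k2 k1 A n = rhat m k2 k1 (Zmod m - A) n"
        using backward_diff[OF assms em k2o _ v(1)] k1e by simp
      then show ?thesis using P_swap by blast
    qed
  qed
qed

end
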